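(* Let $(A,\mathrm{cl})$ be a finite pregeometry with dimension function $d$. Let $X\subseteq A$ be a union of closed sets with $d(X)\ge 2$, and let $\mathcal F(X)$ be the set of closed sets $F$ of $A$ with $F\subsetneq X$. Then $\alpha(X)=-\Delta(\mathcal F(X))$.
   Context: For a pregeometry $(A,\mathrm{cl})$ with dimension function $d$, a closed set is $F$ with $\mathrm{cl}(F)=F$. If $\mathcal F=\{F_i:i\in I\}$ is a non-empty finite set of distinct finite-dimensional closed sets, put $F_S=\bigcap_{i\in S}F_i$ for $\emptyset\ne S\subseteq I$ and $F_\emptyset=\bigcup_{i\in I}F_i$, and define $\Delta(\mathcal F)=\sum_{S\subseteq I}(-1)^{|S|}d(F_S)$. For a finite pregeometry, the $\alpha$-function is defined on unions of closed sets $X$ recursively by $\alpha(X)=|X|-d(X)-\sum_G\alpha(G)$, the sum over closed $G\subsetneq X$. *)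

theory Defs
  imports Main
begin

text \<open>A pregeometry on the carrier set A with closure operator cl (only its
values on subsets of A matter).  Finite character is automatic since we only
consider finite carriers.\<close>

definition pregeometry :: "'a set \<Rightarrow> ('a set \<Rightarrow> 'a set) \<Rightarrow> bool" where
  "pregeometry A cl \<longleftrightarrow>
     (\<forall>X. X \<subseteq> A \<longrightarrow> X \<subseteq> cl X \<and> cl X \<subseteq> A) \<and>
     (\<forall>X Y. X \<subseteq> Y \<and> Y \<subseteq> A \<longrightarrow> cl X \<subseteq> cl Y) \<and>
     (\<forall>X. X \<subseteq> A \<longrightarrow> cl (cl X) = cl X) \<and>
     (\<forall>X a b. X \<subseteq> A \<and> a \<in> A \<and> b \<in> A \<and> a \<in> cl (insert b X) - cl X
         \<longrightarrow> b \<in> cl (insert a X)) \<and>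
     (\<forall>X a. X \<subseteq> A \<and> a \<in> cl X \<longrightarrow> (\<exists>X0. finite X0 \<and> X0 \<subseteq> X \<and> a \<in> cl X0))"

definition closed_set :: "'a set \<Rightarrow> ('a set \<Rightarrow> 'a set) \<Rightarrow> 'a set \<Rightarrow> bool" where
  "closed_set A cl F \<longleftrightarrow> F \<subseteq> A \<and> cl F = F"

definition dim :: "('a set \<Rightarrow> 'a set) \<Rightarrow> 'a set \<Rightarrow> nat" where
  "dim cl X = (LEAST n. \<exists>Y. Y \<subseteq> X \<and> X \<subseteq> cl Y \<and> finite Y \<and> card Y = n)"

definition union_of_closed :: "'a set \<Rightarrow> ('a set \<Rightarrow> 'a set) \<Rightarrow> 'a set \<Rightarrow> bool" where
  "union_of_closed A cl X \<longleftrightarrow> (\<exists>\<S>. (\<forall>F\<in>\<S>. closed_set A cl F) \<and> X = \<Union>\<S>)"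

function alpha :: "'a set \<Rightarrow> ('a set \<Rightarrow> 'a set) \<Rightarrow> 'a set \<Rightarrow> int" where
  "alpha A cl X = int (card X) - int (dim cl X)
     - (if finite X then (\<Sum>G\<in>{G. closed_set A cl G \<and> G \<subset> X}. alpha A cl G) else 0)"
  by auto
termination
  by (relation "measure (\<lambda>(A, cl, X). card X)") (auto intro: psubset_card_mono)

definition Delta :: "('a set \<Rightarrow> 'a set) \<Rightarrow> 'a set set \<Rightarrow> int" where
  "Delta cl \<F> = (\<Sum>S\<in>Pow \<F>. (-1) ^ card S *
       int (dim cl (if S = {} then \<Union>\<F> else \<Inter>S)))"

end

theory Submission
  imports Defs
begin

declare alpha.simps[simp del]

lemma pow_alt_zero:
  assumes "finite U" "U \<noteq> {}"
  shows "(\<Sum>S\<in>Pow U. (-1::int) ^ card S) = 0"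
proof -
  have "card {T. T \<subseteq> U \<and> {} \<subseteq> T \<and> even (card T)} = card {T. T \<subseteq> U \<and> {} \<subseteq> T \<and> odd (card T)}"
    using card_subsupersets_even_odd[of U "{}"] assms by blast
  then have "card {x. x \<in> Pow U \<and> even (card x)} = card {x. x \<in> Pow U \<and> odd (card x)}"
    by simp
  then show ?thesis using sum_alternating_cancels[of "Pow U" card] assms by simp
qed

lemma pow_alt_minus:
  assumes "finite U" "U \<noteq> {}"
  shows "(\<Sum>S\<in>Pow U - {{}}. (-1::int) ^ card S) = -1"
proof -
  have "(\<Sum>S\<in>Pow U. (-1::int) ^ card S) = (-1) ^ card ({}::'a set) + (\<Sum>S\<in>Pow U - {{}}. (-1::int) ^ card S)"
    using assms by (subst sum.remove[of _ "{}"]) auto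
  then show ?thesis using pow_alt_zero[OF assms] by simp
qed

theorem lemma4p2:
  fixes A :: "'a set" and cl :: "'a set \<Rightarrow> 'a set" and X :: "'a set"
  assumes "finite A"
    and "pregeometry A cl"
    and "union_of_closed A cl X"
    and "dim cl X \<ge> 2"
  shows "alpha A cl X = - Delta cl {F. closed_set A cl F \<and> F \<subset> X}"
proof -
  define FF where "FF = {F. closed_set A cl F \<and> F \<subset> X}"
  define P' where "P' = {S. S \<subseteq> FF \<and> S \<noteq> {}}"
  note pgd = assms(2)[unfolded pregeometry_def]
  have pg1: "\<forall>X. X \<subseteq> A \<longrightarrow> X \<subseteq> cl X \<and> cl X \<subseteq> A"
    using pgd by (rule conjunct1)
  have pg2: "\<forall>X Y. X \<subseteq> Y \<and> Y \<subseteq> A \<longrightarrow> cl X \<subseteq> cl Y"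
    using pgd by (rule conjunct1[OF conjunct2])
  have pg3: "\<forall>X. X \<subseteq> A \<longrightarrow> cl (cl X) = cl X"
    using pgd by (rule conjunct1[OF conjunct2[OF conjunct2]])
  have ext: "\<And>Y. Y \<subseteq> A \<Longrightarrow> Y \<subseteq> cl Y \<and> cl Y \<subseteq> A"
    using pg1 by blast
  have mono: "\<And>Y Z. Y \<subseteq> Z \<Longrightarrow> Z \<subseteq> A \<Longrightarrow> cl Y \<subseteq> cl Z"
    using pg2 by blast
  obtain SS where SS: "\<forall>F\<in>SS. closed_set A cl F" "X = \<Union>SS"
    using assms(3) unfolding union_of_closed_def by blast
  have XA: "X \<subseteq> A" using SS unfolding closed_set_def by blast
  have finX: "finite X" using XA assms(1) finite_subset by blast
  have finFF: "finite FF"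
    by (rule finite_subset[of _ "Pow A"]) (auto simp: FF_def closed_set_def assms(1))
  have finmem: "\<And>K. K \<in> FF \<Longrightarrow> finite K"
    using finX unfolding FF_def by (metis (mono_tags, lifting) mem_Collect_eq psubset_imp_subset finite_subset)
  have dim1: "dim cl (cl {x}) \<le> 1" if "x \<in> A" for x
  proof -
    have "\<exists>Y. Y \<subseteq> cl {x} \<and> cl {x} \<subseteq> cl Y \<and> finite Y \<and> card Y = 1"
      using ext[of "{x}"] that by (intro exI[of _ "{x}"]) auto
    then show ?thesis unfolding dim_def by (rule Least_le)
  qed
  have UFF: "\<Union>FF = X"
  proof
    show "\<Union>FF \<subseteq> X" by (auto simp: FF_def)
    show "X \<subseteq> \<Union>FF"
    proof
      fix x assume x: "x \<in> X"
      then obtain F where F: "F \<in> SS" "x \<in> F" using SS by blast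
      have FA: "F \<subseteq> A" "cl F = F" using F SS(1) unfolding closed_set_def by auto
      have xA: "x \<in> A" using F FA by auto
      have "cl {x} \<subseteq> cl F" using mono[of "{x}" F] F FA by auto
      then have sub: "cl {x} \<subseteq> X" using FA F SS by auto
      have cc: "cl (cl {x}) = cl {x}" using pg3 xA by simp
      have "cl {x} \<noteq> X" using dim1[OF xA] assms(4) by auto
      then have "cl {x} \<in> FF" using sub cc ext[of "{x}"] xA
        by (auto simp: FF_def closed_set_def)
      then show "x \<in> \<Union>FF" using ext[of "{x}"] xA by auto
    qed
  qed
  have inter_closed: "closed_set A cl (\<Inter>S) \<and> \<Inter>S \<in> FF" if "S \<in> P'" for S
  proof -
    from that obtain F where F: "F \<in> S" and S: "S \<subseteq> FF" by (auto simp: P'_def)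
    have SA: "\<Inter>S \<subseteq> A" proof - have "F \<subseteq> A" using F S by (auto simp: FF_def closed_set_def) then show ?thesis using F by blast qed
    have "cl (\<Inter>S) \<subseteq> G" if "G \<in> S" for G
    proof -
      have "G \<subseteq> A" "cl G = G" using that S by (auto simp: FF_def closed_set_def)
      then show ?thesis using mono[of "\<Inter>S" G] that by auto
    qed
    then have "cl (\<Inter>S) = \<Inter>S" using ext[OF SA] by blast
    moreover have "\<Inter>S \<subset> X" using F S by (auto simp: FF_def)
    ultimately show ?thesis using SA by (auto simp: FF_def closed_set_def)
  qed
  have alpha_eq: "int (dim cl G) = int (card G) - alpha A cl G
        - (\<Sum>H\<in>{H. closed_set A cl H \<and> H \<subset> G}. alpha A cl H)" if "finite G" for G
    using alpha.simps[of A cl G] that by simp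
  have dimS: "int (dim cl (\<Inter>S)) = int (card (\<Inter>S)) - (\<Sum>H\<in>{H\<in>FF. H \<subseteq> \<Inter>S}. alpha A cl H)"
    if "S \<in> P'" for S
  proof -
    have G: "\<Inter>S \<in> FF" using inter_closed[OF that] by blast
    have finG: "finite (\<Inter>S)" using finmem[OF G] .
    have eq: "{H\<in>FF. H \<subseteq> \<Inter>S} = insert (\<Inter>S) {H. closed_set A cl H \<and> H \<subset> \<Inter>S}"
      using G by (auto simp: FF_def)
    have fin2: "finite {H. closed_set A cl H \<and> H \<subset> \<Inter>S}"
      by (rule finite_subset[of _ "Pow A"]) (auto simp: closed_set_def assms(1))
    show ?thesis unfolding eq using alpha_eq[OF finG] fin2 by simp
  qed
  have dimX: "int (dim cl X) = int (card X) - alpha A cl X - (\<Sum>H\<in>FF. alpha A cl H)"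
    using alpha_eq[OF finX] unfolding FF_def by simp
  have powsplit: "Pow FF = insert {} P'" "{} \<notin> P'" "finite P'"
    using finFF by (auto simp: P'_def)
  have D: "Delta cl FF = int (dim cl X) + (\<Sum>S\<in>P'. (-1) ^ card S * int (dim cl (\<Inter>S)))"
    unfolding Delta_def powsplit(1) using powsplit(2,3) UFF
    apply simp apply (rule sum.cong) apply (auto simp: P'_def) done
  have incl: "int (card X) = - (\<Sum>S\<in>P'. (-1) ^ card S * int (card (\<Inter>S)))"
    using int_card_UNION[OF finFF finmem] UFF
    by (simp add: P'_def sum_negf[symmetric])
  have swap: "(\<Sum>S\<in>P'. (-1) ^ card S * (\<Sum>H\<in>{H\<in>FF. H \<subseteq> \<Inter>S}. alpha A cl H))
      = - (\<Sum>H\<in>FF. alpha A cl H)"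
  proof -
    have "(\<Sum>S\<in>P'. (-1) ^ card S * (\<Sum>H\<in>{H\<in>FF. H \<subseteq> \<Inter>S}. alpha A cl H))
        = (\<Sum>S\<in>P'. \<Sum>H\<in>FF. if H \<subseteq> \<Inter>S then (-1) ^ card S * alpha A cl H else 0)"
      by (simp add: sum_distrib_left sum.inter_filter[OF finFF] if_distrib cong: if_cong)
    also have "\<dots> = (\<Sum>H\<in>FF. \<Sum>S\<in>P'. if H \<subseteq> \<Inter>S then (-1) ^ card S * alpha A cl H else 0)"
      by (rule sum.swap)
    also have "\<dots> = (\<Sum>H\<in>FF. - alpha A cl H)"
    proof (rule sum.cong[OF refl])
      fix H assume H: "H \<in> FF"
      define U where "U = {F\<in>FF. H \<subseteq> F}"
      have U: "finite U" "U \<noteq> {}" using H finFF by (auto simp: U_def)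
      have "{S\<in>P'. H \<subseteq> \<Inter>S} = Pow U - {{}}" by (auto simp: P'_def U_def)
      then have "(\<Sum>S\<in>P'. if H \<subseteq> \<Inter>S then (-1) ^ card S * alpha A cl H else 0)
          = (\<Sum>S\<in>Pow U - {{}}. (-1::int) ^ card S) * alpha A cl H"
        using powsplit(3) by (simp add: sum.inter_filter[symmetric] sum_distrib_right)
      then show "(\<Sum>S\<in>P'. if H \<subseteq> \<Inter>S then (-1) ^ card S * alpha A cl H else 0) = - alpha A cl H"
        using pow_alt_minus[OF U] by simp
    qed
    finally show ?thesis by (simp add: sum_negf)
  qed
  have "(\<Sum>S\<in>P'. (-1) ^ card S * int (dim cl (\<Inter>S)))
      = (\<Sum>S\<in>P'. (-1) ^ card S * int (card (\<Inter>S)))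
        - (\<Sum>S\<in>P'. (-1) ^ card S * (\<Sum>H\<in>{H\<in>FF. H \<subseteq> \<Inter>S}. alpha A cl H))"
    by (simp add: dimS right_diff_distrib sum_subtractf cong: sum.cong)
  then have "Delta cl FF = - alpha A cl X"
    using D dimX incl swap by simp
  then show ?thesis unfolding FF_def by simp
qed

end
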